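(* Let $\psi\in C^1(\mathbb{R})$ satisfy: $\psi(0)=1$, $\psi$ is even, there exist $C>0$ and $\delta>1$ with $|\psi(x)|+|x\psi'(x)|\leq C\langle x\rangle^{-\delta}$ for all $x\in\mathbb{R}$, and $A_\psi:=\int_{\mathbb{R}}\psi(x)\,\mathrm{d}x\neq 0$. Let $h(x)=\psi(x)+x\psi'(x)$ and let $\mu$ be a probability measure on $\mathbb{R}$. Then for $b\in\mathbb{R}$: 1. $\lim_{\varepsilon\downarrow0}\varepsilon\int_\varepsilon^\infty W_h(\mu)(b,a)\frac{\mathrm{d}a}{a}=\mu(\{b\})$. 2. Let $0<\alpha\leq1$ and assume that $(d_\alpha\mu)(b)$ exists. Then $\lim_{\varepsilon\downarrow0}\varepsilon^{1-\alpha}\int_\varepsilon^\infty W_h(\mu)(b,a)\frac{\mathrm{d}a}{a}=c_\alpha(d_\alpha\mu)(b)$, where $c_\alpha=\int_0^\infty\alpha2^\alpha y^{\alpha-1}\psi(y)\,\mathrm{d}y$.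
   Context: $\langle x\rangle=(1+x^2)^{1/2}$. The continuous wavelet transform of $\mu$ is $W_h(\mu)(b,a)=\frac1a\int_{-\infty}^{\infty}h((b-y)/a)\,\mathrm{d}\mu(y)$ for $b\in\mathbb{R}$, $a>0$. For $0\leq\alpha\leq1$, $(d_\alpha\mu)(x)=\lim_{\varepsilon\downarrow0}\mu((x-\varepsilon,x+\varepsilon))/(2\varepsilon)^\alpha$ whenever this limit exists. *)

theory Defs
  imports "HOL-Probability.Probability"
begin

definition jbracket :: "real \<Rightarrow> real" where
  "jbracket x = sqrt (1 + x\<^sup>2)"

definition wavelet_transform :: "(real \<Rightarrow> real) \<Rightarrow> real measure \<Rightarrow> real \<Rightarrow> real \<Rightarrow> real" where
  "wavelet_transform h \<mu> b a = (1 / a) * (\<integral>y. h ((b - y) / a) \<partial>\<mu>)"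

text \<open>(d_alpha mu)(x) exists and equals d: the limit of mu((x-e,x+e)) / (2e)^alpha as e tends to 0 from the right.\<close>
definition has_alpha_density :: "real \<Rightarrow> real measure \<Rightarrow> real \<Rightarrow> real \<Rightarrow> bool" where
  "has_alpha_density \<alpha> \<mu> x d \<longleftrightarrow>
     ((\<lambda>\<epsilon>. measure \<mu> {x - \<epsilon> <..< x + \<epsilon>} / (2 * \<epsilon>) powr \<alpha>) \<longlongrightarrow> d) (at_right 0)"

end

theory Submission imports Defs "HOL-Real_Asymp.Real_Asymp" begin

lemma pow0_int:
  assumes "(\<beta>::real) > 0"
  shows "set_integrable lborel {0<..1} (\<lambda>t::real. t powr (\<beta>-1))"
proof -
  have "(\<lambda>t::real. t powr (\<beta>-1)) integrable_on {0<..1}"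
    by (rule integrable_on_powr_from_0') (use assms in auto)
  hence "(\<lambda>t::real. t powr (\<beta>-1)) absolutely_integrable_on {0<..1}"
    by (subst absolutely_integrable_on_iff_nonneg) auto
  thus ?thesis unfolding set_integrable_def
    by (subst (asm) integrable_completion) auto
qed

lemma powinf_int:
  assumes "(q::real) < -1"
  shows "set_integrable lborel {1..} (\<lambda>t::real. t powr q)"
proof -
  have "(\<lambda>t::real. t powr q) integrable_on {1..}"
    using has_integral_powr_to_inf[OF assms, of 1] by (auto simp: integrable_on_def)
  hence "(\<lambda>t::real. t powr q) absolutely_integrable_on {1..}"
    by (subst absolutely_integrable_on_iff_nonneg) auto
  thus ?thesis unfolding set_integrable_def
    by (subst (asm) integrable_completion) auto
qed

lemma jbracket_ge1: "jbracket x \<ge> 1"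
  unfolding jbracket_def by simp

lemma jbracket_ge_abs: "jbracket x \<ge> \<bar>x\<bar>"
  unfolding jbracket_def by (simp add: real_le_rsqrt)

lemma jbracket_pos: "jbracket x > 0"
  using jbracket_ge1[of x] by linarith

lemma jbracket_measurable[measurable]: "jbracket \<in> borel_measurable borel"
  unfolding jbracket_def by measurable

lemma jb_int:
  assumes "(\<beta>::real) > 0" "\<beta> < \<delta>"
  shows "set_integrable lborel {0<..} (\<lambda>t. t powr (\<beta>-1) * jbracket t powr (-\<delta>))"
proof -
  have d: "\<delta> > 0" using assms by linarith
  have A: "set_integrable lborel {0<..1} (\<lambda>t. t powr (\<beta>-1) * jbracket t powr (-\<delta>))"
  proof (rule set_integrable_bound[OF pow0_int[OF assms(1)]])
    show "set_borel_measurable lborel {0<..1} (\<lambda>t. t powr (\<beta> - 1) * jbracket t powr - \<delta>)"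
      unfolding set_borel_measurable_def by measurable
    have "norm (t powr (\<beta> - 1) * jbracket t powr - \<delta>) \<le> norm (t powr (\<beta> - 1))" for t
    proof -
      have "jbracket t powr - \<delta> \<le> 1"
        using jbracket_ge1[of t] d by (simp add: powr_minus_divide ge_one_powr_ge_zero)
      moreover have "jbracket t powr - \<delta> \<ge> 0" by simp
      ultimately show ?thesis
        by (simp add: abs_mult mult_left_le)
    qed
    thus "AE x in lborel. x \<in> {0<..1} \<longrightarrow> norm (x powr (\<beta> - 1) * jbracket x powr - \<delta>) \<le> norm (x powr (\<beta> - 1))"
      by auto
  qed
  have B: "set_integrable lborel {1..} (\<lambda>t. t powr (\<beta>-1) * jbracket t powr (-\<delta>))"
  proof (rule set_integrable_bound[OF powinf_int[of "\<beta> - 1 - \<delta>"]])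
    show "\<beta> - 1 - \<delta> < -1" using assms by simp
    show "set_borel_measurable lborel {1..} (\<lambda>t. t powr (\<beta> - 1) * jbracket t powr - \<delta>)"
      unfolding set_borel_measurable_def by measurable
    have "norm (t powr (\<beta> - 1) * jbracket t powr - \<delta>) \<le> norm (t powr (\<beta> - 1 - \<delta>))" if "t \<ge> 1" for t
    proof -
      have "jbracket t powr - \<delta> \<le> t powr - \<delta>"
        using jbracket_ge_abs[of t] that d by (intro powr_mono2') auto
      hence "t powr (\<beta> - 1) * jbracket t powr - \<delta> \<le> t powr (\<beta> - 1) * t powr - \<delta>"
        by (intro mult_left_mono) auto
      also have "\<dots> = t powr (\<beta> - 1 - \<delta>)" using that by (simp add: powr_add[symmetric])
      finally show ?thesis using that by simp
    qed
    thus "AE x in lborel. x \<in> {1..} \<longrightarrow> norm (x powr (\<beta> - 1) * jbracket x powr - \<delta>) \<le> norm (x powr (\<beta> - 1 - \<delta>))"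
      by auto
  qed
  have "{0<..} = {0<..1} \<union> {1::real..}" by auto
  with set_integrable_Un[OF A B] show ?thesis by auto
qed

lemma dc_at_right:
  fixes s :: "real \<Rightarrow> 'a \<Rightarrow> real"
  assumes meas: "\<And>e. e > 0 \<Longrightarrow> s e \<in> borel_measurable M" and fm: "f \<in> borel_measurable M"
    and w: "integrable M w"
    and bnd: "\<And>e x. e > 0 \<Longrightarrow> x \<in> space M \<Longrightarrow> \<bar>s e x\<bar> \<le> w x"
    and lim: "\<And>x. x \<in> space M \<Longrightarrow> ((\<lambda>e. s e x) \<longlongrightarrow> f x) (at_right 0)"
  shows "((\<lambda>e. \<integral>x. s e x \<partial>M) \<longlongrightarrow> (\<integral>x. f x \<partial>M)) (at_right 0)"
proof (rule tendsto_at_right_sequentially[of 0 1])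
  fix S :: "nat \<Rightarrow> real"
  assume S: "\<And>n. 0 < S n" "S \<longlonglongrightarrow> 0"
  show "(\<lambda>n. \<integral>x. s (S n) x \<partial>M) \<longlonglongrightarrow> (\<integral>x. f x \<partial>M)"
  proof (rule integral_dominated_convergence[where w=w])
    show "AE x in M. (\<lambda>i. s (S i) x) \<longlonglongrightarrow> f x"
    proof (rule AE_I2)
      fix x assume x: "x \<in> space M"
      have "filterlim S (at_right 0) sequentially"
        using S by (intro tendsto_imp_filterlim_at_right) (auto intro: always_eventually)
      thus "(\<lambda>i. s (S i) x) \<longlonglongrightarrow> f x"
        using filterlim_compose[OF lim[OF x]] by blast
    qed
    show "AE x in M. norm (s (S i) x) \<le> w x" for i
      using bnd[OF S(1)] by auto
  qed (use meas S fm w in auto)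
qed simp

lemma fubini_helper:
  fixes f :: "real \<Rightarrow> real \<Rightarrow> real"
  assumes prob: "prob_space \<mu>" and sets: "sets \<mu> = sets borel"
    and S: "S \<in> sets borel" and g: "set_integrable lborel S g"
    and fm: "(\<lambda>(t,y). f t y) \<in> borel_measurable (lborel \<Otimes>\<^sub>M borel)"
    and bnd: "\<And>t y. t \<in> S \<Longrightarrow> \<bar>f t y\<bar> \<le> g t"
  shows "(\<integral>y. (LBINT t:S. f t y) \<partial>\<mu>) = (LBINT t:S. (\<integral>y. f t y \<partial>\<mu>))"
proof -
  interpret prob_space \<mu> by fact
  interpret P: pair_sigma_finite lborel \<mu> ..
  have ms[measurable_cong]: "sets \<mu> = sets borel" by fact
  have [measurable]: "S \<in> sets borel" by fact
  have fm'[measurable]: "(\<lambda>(t,y). f t y) \<in> borel_measurable (lborel \<Otimes>\<^sub>M \<mu>)"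
    using fm by (simp add: sets_pair_measure_cong[OF refl ms] measurable_def space_pair_measure
        cong: measurable_cong_sets)
  have gm[measurable]: "(\<lambda>t. indicator S t * g t) \<in> borel_measurable lborel"
    using g unfolding set_integrable_def by (simp add: borel_measurable_integrable)
  have gi: "integrable lborel (\<lambda>t. indicator S t * g t)"
    using g unfolding set_integrable_def by simp
  have G: "integrable (lborel \<Otimes>\<^sub>M \<mu>) (\<lambda>(t,y). indicator S t * g t)"
  proof (rule P.Fubini_integrable)
    show "integrable lborel (\<lambda>t. \<integral>y. norm (case (t, y) of (t, y) \<Rightarrow> indicator S t * g t) \<partial>\<mu>)"
      using integrable_norm[OF gi] by (simp add: prob_space)
    show "AE x in lborel. integrable \<mu> (\<lambda>y. case (x, y) of (t, y) \<Rightarrow> indicat_real S t * g t)"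
      by simp
  qed measurable
  have F: "integrable (lborel \<Otimes>\<^sub>M \<mu>) (\<lambda>(t,y). indicator S t * f t y)"
  proof (rule Bochner_Integration.integrable_bound[OF G])
    show "(\<lambda>(t,y). indicator S t * f t y) \<in> borel_measurable (lborel \<Otimes>\<^sub>M \<mu>)"
      by measurable
    show "AE x in lborel \<Otimes>\<^sub>M \<mu>. norm (case x of (t, y) \<Rightarrow> indicat_real S t * f t y)
           \<le> norm (case x of (t, y) \<Rightarrow> indicat_real S t * g t)"
    proof (rule AE_I2, clarify)
      fix t y
      show "norm (indicat_real S t * f t y) \<le> norm (indicat_real S t * g t)"
        using bnd[of t y] by (auto simp: indicator_def)
    qed
  qed
  have "(\<integral>y. (LBINT t:S. f t y) \<partial>\<mu>) = (\<integral>y. (\<integral>t. indicator S t * f t y \<partial>lborel) \<partial>\<mu>)"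
    by (simp add: set_lebesgue_integral_def)
  also have "\<dots> = (\<integral>t. (\<integral>y. indicator S t * f t y \<partial>\<mu>) \<partial>lborel)"
    using P.Fubini_integral[of "\<lambda>t y. indicator S t * f t y"] F by simp
  also have "\<dots> = (LBINT t:S. (\<integral>y. f t y \<partial>\<mu>))"
    by (simp add: set_lebesgue_integral_def)
  finally show ?thesis .
qed

locale wv =
  fixes \<psi> \<psi>' :: "real \<Rightarrow> real" and C \<delta> :: real
  assumes deriv: "\<And>x. (\<psi> has_real_derivative \<psi>' x) (at x)"
    and cont': "continuous_on UNIV \<psi>'"
    and psi0: "\<psi> 0 = 1"
    and even: "\<And>x. \<psi> (- x) = \<psi> x"
    and Cpos: "C > 0" and dgt: "\<delta> > 1"
    and dec: "\<And>x. \<bar>\<psi> x\<bar> + \<bar>x * \<psi>' x\<bar> \<le> C * jbracket x powr (- \<delta>)"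
begin

lemma isCont_psi: "isCont \<psi> x"
  using deriv DERIV_isCont by blast

lemma cont_psi: "continuous_on UNIV \<psi>"
  using isCont_psi continuous_at_imp_continuous_on by blast

lemma isCont_psi': "isCont \<psi>' x"
  using cont' continuous_on_eq_continuous_at by blast

lemma meas_psi[measurable]: "\<psi> \<in> borel_measurable borel"
  using cont_psi borel_measurable_continuous_onI by blast

lemma meas_psi'[measurable]: "\<psi>' \<in> borel_measurable borel"
  using cont' borel_measurable_continuous_onI by blast

lemma jb_le1: "jbracket x powr (- \<delta>) \<le> 1"
  using jbracket_ge1[of x] dgt by (simp add: powr_minus_divide ge_one_powr_ge_zero)

lemma psi_dec: "\<bar>\<psi> x\<bar> \<le> C * jbracket x powr (- \<delta>)"
  using dec[of x] by linarith

lemma psi'_dec: "\<bar>x * \<psi>' x\<bar> \<le> C * jbracket x powr (- \<delta>)"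
  using dec[of x] by linarith

lemma Cjb_le: "C * jbracket x powr (- \<delta>) \<le> C"
  using mult_left_mono[OF jb_le1[of x], of C] Cpos by simp

lemma psi_bnd: "\<bar>\<psi> x\<bar> \<le> C"
  using psi_dec[of x] Cjb_le[of x] by linarith

lemma h_bnd: "\<bar>\<psi> x + x * \<psi>' x\<bar> \<le> C"
proof -
  have "\<bar>\<psi> x + x * \<psi>' x\<bar> \<le> \<bar>\<psi> x\<bar> + \<bar>x * \<psi>' x\<bar>" by (rule abs_triangle_ineq)
  thus ?thesis using dec[of x] Cjb_le[of x] by linarith
qed

lemma inv_sq_int:
  assumes "(e::real) > 0"
  shows "set_integrable lborel {e<..} (\<lambda>a. 1 / a^2)"
proof -
  have "set_integrable lborel (einterval (ereal e) \<infinity>) (\<lambda>a. 1 / a^2)"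
  proof (rule interval_integral_FTC_nonneg(1)[where F="\<lambda>a. - 1 / a" and A="- 1 / e" and B=0])
    show "ereal e < \<infinity>" by simp
    show "DERIV (\<lambda>a. - 1 / a) x :> 1 / x^2" if "ereal e < ereal x" for x
      using that assms by (auto intro!: derivative_eq_intros simp: power2_eq_square)
    show "isCont (\<lambda>a. 1 / a^2) x" if "ereal e < ereal x" for x
      using that assms by (auto intro!: continuous_intros)
    show "AE x in lborel. ereal e < ereal x \<longrightarrow> ereal x < \<infinity> \<longrightarrow> 0 \<le> 1 / x^2"
      by auto
    show "(((\<lambda>a. - 1 / a) \<circ> real_of_ereal) \<longlongrightarrow> - 1 / e) (at_right (ereal e))"
      unfolding ereal_tendsto_simps using assms by (auto intro!: tendsto_eq_intros)
    show "(((\<lambda>a. - 1 / a) \<circ> real_of_ereal) \<longlongrightarrow> 0) (at_left \<infinity>)"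
      unfolding ereal_tendsto_simps by real_asymp
  qed
  thus ?thesis by simp
qed

lemma key_inner:
  assumes "(e::real) > 0"
  shows "set_integrable lborel {e<..} (\<lambda>a. 1 / a^2 * (\<psi> (c/a) + (c/a) * \<psi>' (c/a)))"
    and "(LBINT a:{e<..}. 1 / a^2 * (\<psi> (c/a) + (c/a) * \<psi>' (c/a))) = \<psi> (c/e) / e"
proof -
  let ?f = "\<lambda>a. 1 / a^2 * (\<psi> (c/a) + (c/a) * \<psi>' (c/a))"
  show int: "set_integrable lborel {e<..} ?f"
  proof (rule set_integrable_bound[OF set_integrable_mult_right[OF inv_sq_int[OF assms], of C]])
    show "set_borel_measurable lborel {e<..} ?f"
      unfolding set_borel_measurable_def by measurable
    have "norm (?f a) \<le> norm (C * (1 / a^2))" if "a > e" for a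
      using h_bnd[of "c/a"] Cpos that assms
      by (auto simp: abs_mult intro!: divide_right_mono)
    thus "AE x in lborel. x \<in> {e<..} \<longrightarrow> norm (?f x) \<le> norm (C * (1 / x^2))"
      by auto
  qed
  have "(LBINT a=ereal e..\<infinity>. ?f a) = 0 - (- 1 / e * \<psi> (c/e))"
  proof (rule interval_integral_FTC_integrable[where F="\<lambda>a. - 1 / a * \<psi> (c/a)"])
    show "ereal e < \<infinity>" by simp
    show "((\<lambda>a. - 1 / a * \<psi> (c/a)) has_vector_derivative ?f x) (at x)" if "ereal e < ereal x" for x
    proof -
      have x: "x > 0" using that assms by simp
      have d1: "((\<lambda>a. \<psi> (c/a)) has_real_derivative \<psi>' (c/x) * (- c / x^2)) (at x)"
        by (rule DERIV_chain2[OF deriv]) (use x in \<open>auto intro!: derivative_eq_intros simp: power2_eq_square\<close>)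
      have "((\<lambda>a. - 1 / a * \<psi> (c/a)) has_real_derivative
               (1 / x^2) * \<psi> (c/x) + (- 1 / x) * (\<psi>' (c/x) * (- c / x^2))) (at x)"
        using x by (auto intro!: derivative_eq_intros d1 simp: field_simps power2_eq_square)
      moreover have "(1 / x^2) * \<psi> (c/x) + (- 1 / x) * (\<psi>' (c/x) * (- c / x^2)) = ?f x"
        using x by (simp add: field_simps power2_eq_square)
      ultimately show ?thesis
        by (simp add: has_real_derivative_iff_has_vector_derivative)
    qed
    show "isCont ?f x" if "ereal e < ereal x" for x
      using that assms
      by (auto intro!: continuous_intros isCont_o2[OF _ isCont_psi] isCont_o2[OF _ isCont_psi'])
    show "set_integrable lborel (einterval (ereal e) \<infinity>) ?f" using int by simp
    show "(((\<lambda>a. - 1 / a * \<psi> (c/a)) \<circ> real_of_ereal) \<longlongrightarrow> - 1 / e * \<psi> (c/e)) (at_right (ereal e))"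
      unfolding ereal_tendsto_simps using assms
      by (auto intro!: tendsto_eq_intros isCont_tendsto_compose[OF isCont_psi])
    show "(((\<lambda>a. - 1 / a * \<psi> (c/a)) \<circ> real_of_ereal) \<longlongrightarrow> 0) (at_left \<infinity>)"
      unfolding ereal_tendsto_simps
    proof (rule Lim_null_comparison[where g="\<lambda>a. C / a"])
      show "\<forall>\<^sub>F x in at_top. norm (- 1 / x * \<psi> (c / x)) \<le> C / x"
        using eventually_gt_at_top[of 0]
        by eventually_elim (use psi_bnd in \<open>auto simp: abs_mult divide_right_mono\<close>)
      show "((\<lambda>a. C / a) \<longlongrightarrow> 0) at_top" by real_asymp
    qed
  qed
  thus "(LBINT a:{e<..}. ?f a) = \<psi> (c/e) / e"
    by (simp add: interval_lebesgue_integral_def)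
qed

lemma psi'_K: "\<exists>K>0. \<forall>x. \<bar>\<psi>' x\<bar> \<le> K * jbracket x powr (- \<delta>)"
proof -
  have "compact (\<psi>' ` {-1..1})"
    by (rule compact_continuous_image[OF continuous_on_subset[OF cont'] compact_Icc]) auto
  then obtain K0 where K0: "\<And>x. x \<in> {-1..1} \<Longrightarrow> \<bar>\<psi>' x\<bar> \<le> K0"
    using compact_imp_bounded bounded_iff by (metis image_eqI real_norm_def)
  define c0 where "c0 = (sqrt 2) powr (- \<delta>)"
  have c0: "c0 > 0" unfolding c0_def by simp
  define K where "K = \<bar>K0\<bar> / c0 + C"
  have Kpos: "K > 0" unfolding K_def using c0 Cpos by (simp add: add_nonneg_pos)
  have "\<bar>\<psi>' x\<bar> \<le> K * jbracket x powr (- \<delta>)" for x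
  proof (cases "\<bar>x\<bar> \<le> 1")
    case True
    have "jbracket x \<le> sqrt 2" unfolding jbracket_def using True
      by (simp add: abs_square_le_1)
    hence "c0 \<le> jbracket x powr (- \<delta>)" unfolding c0_def
      using jbracket_pos[of x] dgt by (intro powr_mono2') auto
    hence "\<bar>K0\<bar> / c0 * c0 \<le> \<bar>K0\<bar> / c0 * jbracket x powr (- \<delta>)"
      using c0 by (intro mult_left_mono) auto
    hence "\<bar>K0\<bar> \<le> \<bar>K0\<bar> / c0 * jbracket x powr (- \<delta>)" using c0 by simp
    moreover have "\<bar>\<psi>' x\<bar> \<le> K0" using True by (intro K0) (auto simp: abs_le_iff)
    moreover have "0 \<le> C * jbracket x powr (- \<delta>)" using Cpos by simp
    ultimately show ?thesis unfolding K_def by (simp add: distrib_right)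
  next
    case False
    have "\<bar>\<psi>' x\<bar> \<le> \<bar>x\<bar> * \<bar>\<psi>' x\<bar>" using False by (simp add: mult_le_cancel_right1)
    also have "\<dots> \<le> C * jbracket x powr (- \<delta>)" using psi'_dec[of x] by (simp add: abs_mult)
    also have "\<dots> \<le> K * jbracket x powr (- \<delta>)" unfolding K_def using c0
      by (intro mult_right_mono) auto
    finally show ?thesis .
  qed
  thus ?thesis using Kpos by blast
qed

lemma jb_int1: "set_integrable lborel {0<..} (\<lambda>t. jbracket t powr (- \<delta>))"
proof -
  have "set_integrable lborel {0<..} (\<lambda>t. t powr (1-1) * jbracket t powr (-\<delta>))"
    using jb_int[of 1 \<delta>] dgt by simp
  thus ?thesis by (rule set_integrable_cong[THEN iffD1, rotated -1]) auto
qed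

lemma int_psi': "set_integrable lborel {0<..} \<psi>'"
proof -
  obtain K where K: "K > 0" "\<And>x. \<bar>\<psi>' x\<bar> \<le> K * jbracket x powr (- \<delta>)" using psi'_K by blast
  show ?thesis
  proof (rule set_integrable_bound[OF set_integrable_mult_right[OF jb_int1, of K]])
    show "set_borel_measurable lborel {0<..} \<psi>'"
      unfolding set_borel_measurable_def by measurable
    show "AE x in lborel. x \<in> {0<..} \<longrightarrow> norm (\<psi>' x) \<le> norm (K * jbracket x powr - \<delta>)"
      using K by auto
  qed
qed

lemma int_A:
  assumes "0 < \<alpha>" "\<alpha> \<le> 1"
  shows "set_integrable lborel {0<..} (\<lambda>t. t powr (\<alpha>-1) * \<psi> t)"
proof (rule set_integrable_bound[OF set_integrable_mult_right[OF jb_int[of \<alpha> \<delta>], of C]])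
  show "0 < \<alpha>" "\<alpha> < \<delta>" using assms dgt by auto
  show "set_borel_measurable lborel {0<..} (\<lambda>t. t powr (\<alpha>-1) * \<psi> t)"
    unfolding set_borel_measurable_def by measurable
  have "norm (t powr (\<alpha>-1) * \<psi> t) \<le> norm (C * (t powr (\<alpha> - 1) * jbracket t powr - \<delta>))" for t
  proof -
    have "\<bar>t powr (\<alpha>-1) * \<psi> t\<bar> = t powr (\<alpha>-1) * \<bar>\<psi> t\<bar>" by (simp add: abs_mult)
    also have "\<dots> \<le> t powr (\<alpha>-1) * (C * jbracket t powr (- \<delta>))"
      by (intro mult_left_mono psi_dec) auto
    finally show ?thesis using Cpos by (simp add: abs_mult mult_ac)
  qed
  thus "AE x in lborel. x \<in> {0<..} \<longrightarrow> norm (x powr (\<alpha>-1) * \<psi> x) \<le> norm (C * (x powr (\<alpha> - 1) * jbracket x powr - \<delta>))"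
    by auto
qed

lemma int_B:
  assumes "0 < \<alpha>" "\<alpha> \<le> 1"
  shows "set_integrable lborel {0<..} (\<lambda>t. t powr \<alpha> * \<psi>' t)"
proof (rule set_integrable_bound[OF set_integrable_mult_right[OF jb_int[of \<alpha> \<delta>], of C]])
  show "0 < \<alpha>" "\<alpha> < \<delta>" using assms dgt by auto
  show "set_borel_measurable lborel {0<..} (\<lambda>t. t powr \<alpha> * \<psi>' t)"
    unfolding set_borel_measurable_def by measurable
  have "norm (t powr \<alpha> * \<psi>' t) \<le> norm (C * (t powr (\<alpha> - 1) * jbracket t powr - \<delta>))" if "t > 0" for t
  proof -
    have "t powr \<alpha> * \<psi>' t = t powr (\<alpha>-1) * (t * \<psi>' t)"
      using that by (simp add: powr_diff)
    hence "\<bar>t powr \<alpha> * \<psi>' t\<bar> = t powr (\<alpha>-1) * \<bar>t * \<psi>' t\<bar>"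
      by (metis abs_mult abs_of_nonneg powr_ge_zero)
    also have "\<dots> \<le> t powr (\<alpha>-1) * (C * jbracket t powr (- \<delta>))"
      by (intro mult_left_mono psi'_dec) auto
    finally show ?thesis using Cpos that by (simp add: abs_mult mult_ac)
  qed
  thus "AE x in lborel. x \<in> {0<..} \<longrightarrow> norm (x powr \<alpha> * \<psi>' x) \<le> norm (C * (x powr (\<alpha> - 1) * jbracket x powr - \<delta>))"
    by auto
qed

lemma psi_small: "x \<noteq> 0 \<Longrightarrow> \<bar>\<psi> x\<bar> \<le> C / \<bar>x\<bar>"
proof -
  assume x: "x \<noteq> 0"
  have "jbracket x powr (- \<delta>) \<le> jbracket x powr (-1)"
    using jbracket_ge1[of x] dgt by (intro powr_mono) auto
  also have "\<dots> = 1 / jbracket x" using jbracket_pos[of x] by (simp add: powr_minus_divide)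
  also have "\<dots> \<le> 1 / \<bar>x\<bar>" using jbracket_ge_abs[of x] x by (intro divide_left_mono) auto
  finally have "C * jbracket x powr (- \<delta>) \<le> C * (1 / \<bar>x\<bar>)" using Cpos by (intro mult_left_mono) auto
  thus ?thesis using psi_dec[of x] by simp
qed

lemma psi_small2: "x > 0 \<Longrightarrow> \<bar>\<psi> x\<bar> \<le> C * x powr (- \<delta>)"
proof -
  assume x: "x > 0"
  have "jbracket x powr (- \<delta>) \<le> x powr (- \<delta>)"
    using jbracket_ge_abs[of x] x dgt by (intro powr_mono2') auto
  hence "C * jbracket x powr (- \<delta>) \<le> C * x powr (- \<delta>)" using Cpos by (intro mult_left_mono) auto
  thus ?thesis using psi_dec[of x] by simp
qed

lemma psi_at_top: "(\<psi> \<longlongrightarrow> 0) at_top"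
proof (rule Lim_null_comparison[where g="\<lambda>x. C / x"])
  show "\<forall>\<^sub>F x in at_top. norm (\<psi> x) \<le> C / x"
    using eventually_gt_at_top[of 0]
  proof eventually_elim
    case (elim x)
    have "\<bar>\<psi> x\<bar> \<le> C / \<bar>x\<bar>" using psi_small[of x] elim by simp
    thus ?case using elim by simp
  qed
  show "((\<lambda>x. C / x) \<longlongrightarrow> 0) at_top" by real_asymp
qed

lemma psi_tail:
  assumes "s \<ge> 0"
  shows "\<psi> s = - (LBINT t:{s<..}. \<psi>' t)"
proof -
  have int: "set_integrable lborel {s<..} \<psi>'"
    by (rule set_integrable_subset[OF int_psi']) (use assms in auto)
  have "(LBINT t=ereal s..\<infinity>. \<psi>' t) = 0 - \<psi> s"
  proof (rule interval_integral_FTC_integrable[where F=\<psi>])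
    show "ereal s < \<infinity>" by simp
    show "(\<psi> has_vector_derivative \<psi>' x) (at x)" for x
      using deriv by (simp add: has_real_derivative_iff_has_vector_derivative)
    show "isCont \<psi>' x" for x by (rule isCont_psi')
    show "set_integrable lborel (einterval (ereal s) \<infinity>) \<psi>'" using int by simp
    show "((\<psi> \<circ> real_of_ereal) \<longlongrightarrow> \<psi> s) (at_right (ereal s))"
      unfolding ereal_tendsto_simps using isCont_psi[of s]
      by (simp add: continuous_at filterlim_at_split)
    show "((\<psi> \<circ> real_of_ereal) \<longlongrightarrow> 0) (at_left \<infinity>)"
      unfolding ereal_tendsto_simps by (rule psi_at_top)
  qed
  thus ?thesis by (simp add: interval_lebesgue_integral_def)
qed

lemma ibp:
  assumes "0 < \<alpha>" "\<alpha> \<le> 1"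
  shows "(LBINT t:{0<..}. t powr (\<alpha>-1) * \<psi> t) * \<alpha> = - (LBINT t:{0<..}. t powr \<alpha> * \<psi>' t)"
proof -
  let ?f = "\<lambda>t. \<alpha> * (t powr (\<alpha>-1) * \<psi> t) + t powr \<alpha> * \<psi>' t"
  have iA: "set_integrable lborel {0<..} (\<lambda>t. \<alpha> * (t powr (\<alpha>-1) * \<psi> t))"
    using int_A[OF assms] by simp
  have int: "set_integrable lborel {0<..} ?f"
    by (rule set_integral_add(1)[OF iA int_B[OF assms]])
  have "(LBINT t=ereal 0..\<infinity>. ?f t) = 0 - 0"
  proof (rule interval_integral_FTC_integrable[where F="\<lambda>t. t powr \<alpha> * \<psi> t"])
    show "ereal 0 < \<infinity>" by simp
    show "((\<lambda>t. t powr \<alpha> * \<psi> t) has_vector_derivative ?f x) (at x)" if "ereal 0 < ereal x" for x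
    proof -
      have x: "x > 0" using that by simp
      have "((\<lambda>t. t powr \<alpha> * \<psi> t) has_real_derivative
              (\<alpha> * x powr (\<alpha> - 1)) * \<psi> x + x powr \<alpha> * \<psi>' x) (at x)"
        using x by (auto intro!: derivative_eq_intros deriv)
      thus ?thesis by (simp add: has_real_derivative_iff_has_vector_derivative mult_ac)
    qed
    show "isCont ?f x" if "ereal 0 < ereal x" for x
      using that by (auto intro!: continuous_intros isCont_psi isCont_psi')
    show "set_integrable lborel (einterval (ereal 0) \<infinity>) ?f" using int by simp
    show "(((\<lambda>t. t powr \<alpha> * \<psi> t) \<circ> real_of_ereal) \<longlongrightarrow> 0) (at_right (ereal 0))"
      unfolding ereal_tendsto_simps
    proof -
      have "((\<lambda>t. t powr \<alpha>) \<longlongrightarrow> 0) (at_right (0::real))"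
        using assms by real_asymp
      moreover have "(\<psi> \<longlongrightarrow> \<psi> 0) (at_right 0)"
        using isCont_psi[of 0] by (simp add: continuous_at filterlim_at_split)
      ultimately show "((\<lambda>t. t powr \<alpha> * \<psi> t) \<longlongrightarrow> 0) (at_right 0)"
        using tendsto_mult by fastforce
    qed
    show "(((\<lambda>t. t powr \<alpha> * \<psi> t) \<circ> real_of_ereal) \<longlongrightarrow> 0) (at_left \<infinity>)"
      unfolding ereal_tendsto_simps
    proof (rule Lim_null_comparison[where g="\<lambda>t. C * t powr (\<alpha> - \<delta>)"])
      have "((\<lambda>t. t powr (\<alpha> - \<delta>)) \<longlongrightarrow> 0) at_top"
        using assms dgt by (intro tendsto_neg_powr filterlim_ident) auto
      thus "((\<lambda>t. C * t powr (\<alpha> - \<delta>)) \<longlongrightarrow> 0) at_top"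
        by (intro tendsto_mult_right_zero)
      show "\<forall>\<^sub>F x in at_top. norm (x powr \<alpha> * \<psi> x) \<le> C * x powr (\<alpha> - \<delta>)"
        using eventually_gt_at_top[of 0]
      proof eventually_elim
        case (elim x)
        have "norm (x powr \<alpha> * \<psi> x) = x powr \<alpha> * \<bar>\<psi> x\<bar>" by (simp add: abs_mult)
        also have "\<dots> \<le> x powr \<alpha> * (C * x powr (- \<delta>))"
          using psi_small2[of x] elim by (intro mult_left_mono) auto
        also have "\<dots> = C * x powr (\<alpha> - \<delta>)" using elim by (simp add: powr_diff powr_minus_divide)
        finally show ?case .
      qed
    qed
  qed
  hence "(LBINT t:{0<..}. ?f t) = 0"
    by (simp add: interval_lebesgue_integral_def zero_ereal_def)
  moreover have "(LBINT t:{0<..}. ?f t) = \<alpha> * (LBINT t:{0<..}. t powr (\<alpha>-1) * \<psi> t) + (LBINT t:{0<..}. t powr \<alpha> * \<psi>' t)"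
    using set_integral_add(2)[OF iA int_B[OF assms]] by simp
  ultimately show ?thesis by (simp add: mult_ac)
qed

lemma layer:
  assumes prob: "prob_space \<mu>" and sets: "sets \<mu> = sets borel" and e: "e > 0"
  shows "(\<integral>y. \<psi> ((b-y)/e) \<partial>\<mu>) = - (LBINT t:{0<..}. \<psi>' t * measure \<mu> {b - e*t<..<b + e*t})"
proof -
  have sp: "space \<mu> = UNIV" using sets_eq_imp_space_eq[OF sets] by simp
  have pt: "\<psi> ((b-y)/e) = - (LBINT t:{0<..}. (if b - e*t < y \<and> y < b + e*t then \<psi>' t else 0))" for y
  proof -
    have "\<psi> ((b-y)/e) = \<psi> (\<bar>b-y\<bar>/e)"
      by (cases "b - y \<ge> 0") (auto simp: even[of "(b-y)/e", symmetric] minus_divide_left)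
    also have "\<dots> = - (LBINT t:{\<bar>b-y\<bar>/e<..}. \<psi>' t)"
      by (rule psi_tail) (use e in auto)
    also have "(LBINT t:{\<bar>b-y\<bar>/e<..}. \<psi>' t) = (LBINT t:{0<..}. (if b - e*t < y \<and> y < b + e*t then \<psi>' t else 0))"
      unfolding set_lebesgue_integral_def
    proof (rule Bochner_Integration.integral_cong[OF refl])
      fix t
      have "(\<bar>b-y\<bar>/e < t) \<longleftrightarrow> \<bar>b-y\<bar> < e*t" using e by (simp add: divide_less_eq mult.commute)
      moreover have "\<bar>b-y\<bar> < e*t \<Longrightarrow> t > 0" using e
        by (metis abs_ge_zero le_less_trans mult_le_0_iff not_le order.strict_iff_not)
      moreover have "\<bar>b-y\<bar> < e*t \<longleftrightarrow> b - e*t < y \<and> y < b + e*t" by (auto simp: abs_less_iff)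
      ultimately show "indicat_real {\<bar>b - y\<bar> / e<..} t *\<^sub>R \<psi>' t =
          indicat_real {0<..} t *\<^sub>R (if b - e * t < y \<and> y < b + e * t then \<psi>' t else 0)"
        by (auto simp: indicator_def)
    qed
    finally show ?thesis .
  qed
  have "(\<integral>y. \<psi> ((b-y)/e) \<partial>\<mu>) = (\<integral>y. - (LBINT t:{0<..}. (if b - e*t < y \<and> y < b + e*t then \<psi>' t else 0)) \<partial>\<mu>)"
    using pt by simp
  also have "\<dots> = - (\<integral>y. (LBINT t:{0<..}. (if b - e*t < y \<and> y < b + e*t then \<psi>' t else 0)) \<partial>\<mu>)"
    by (rule integral_minus)
  also have "(\<integral>y. (LBINT t:{0<..}. (if b - e*t < y \<and> y < b + e*t then \<psi>' t else 0)) \<partial>\<mu>)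
      = (LBINT t:{0<..}. (\<integral>y. (if b - e*t < y \<and> y < b + e*t then \<psi>' t else 0) \<partial>\<mu>))"
  proof (rule fubini_helper[OF prob sets, where g="\<lambda>t. \<bar>\<psi>' t\<bar>"])
    show "{0::real<..} \<in> sets borel" by simp
    show "set_integrable lborel {0<..} (\<lambda>t. \<bar>\<psi>' t\<bar>)" by (rule set_integrable_abs[OF int_psi'])
    show "(\<lambda>(t, y). if b - e * t < y \<and> y < b + e * t then \<psi>' t else 0) \<in> borel_measurable (lborel \<Otimes>\<^sub>M borel)"
      by measurable
    show "\<bar>if b - e * t < y \<and> y < b + e * t then \<psi>' t else 0\<bar> \<le> \<bar>\<psi>' t\<bar>" for t y
      by auto
  qed
  also have "\<dots> = (LBINT t:{0<..}. \<psi>' t * measure \<mu> {b - e*t<..<b + e*t})"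
  proof -
    have "(\<integral>y. (if b - e*t < y \<and> y < b + e*t then \<psi>' t else 0) \<partial>\<mu>) = \<psi>' t * measure \<mu> {b - e*t<..<b + e*t}" for t
    proof -
      have "(\<integral>y. (if b - e*t < y \<and> y < b + e*t then \<psi>' t else 0) \<partial>\<mu>) = (\<integral>y. \<psi>' t * indicator {b - e*t<..<b + e*t} y \<partial>\<mu>)"
        by (rule Bochner_Integration.integral_cong) (auto simp: indicator_def)
      also have "\<dots> = \<psi>' t * measure \<mu> {b - e*t<..<b + e*t}"
        by (simp add: sp)
      finally show ?thesis .
    qed
    thus ?thesis by simp
  qed
  finally show ?thesis .
qed

lemma wt_identity:
  assumes prob: "prob_space \<mu>" and sets: "sets \<mu> = sets borel" and e: "e > 0"
  shows "(LBINT a:{e<..}. wavelet_transform (\<lambda>x. \<psi> x + x * \<psi>' x) \<mu> b a / a)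
           = (\<integral>y. \<psi> ((b-y)/e) \<partial>\<mu>) / e"
proof -
  let ?f = "\<lambda>a y. 1 / a^2 * (\<psi> ((b-y)/a) + ((b-y)/a) * \<psi>' ((b-y)/a))"
  have "(LBINT a:{e<..}. wavelet_transform (\<lambda>x. \<psi> x + x * \<psi>' x) \<mu> b a / a)
      = (LBINT a:{e<..}. (\<integral>y. ?f a y \<partial>\<mu>))"
  proof -
    have "wavelet_transform (\<lambda>x. \<psi> x + x * \<psi>' x) \<mu> b a / a = (\<integral>y. ?f a y \<partial>\<mu>)" for a
      unfolding wavelet_transform_def
      by (simp add: power2_eq_square)
    thus ?thesis by simp
  qed
  also have "\<dots> = (\<integral>y. (LBINT a:{e<..}. ?f a y) \<partial>\<mu>)"
  proof (rule fubini_helper[OF prob sets, where g="\<lambda>a. C * (1 / a^2)", symmetric])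
    show "{e<..} \<in> sets borel" by simp
    show "set_integrable lborel {e<..} (\<lambda>a. C * (1 / a^2))"
      by (rule set_integrable_mult_right, rule inv_sq_int[OF e])
    show "(\<lambda>(t, y). ?f t y) \<in> borel_measurable (lborel \<Otimes>\<^sub>M borel)"
      by measurable
    show "\<bar>?f t y\<bar> \<le> C * (1 / t^2)" if "t \<in> {e<..}" for t y
      using h_bnd[of "(b-y)/t"] that e by (auto simp: abs_mult intro!: divide_right_mono)
  qed
  also have "\<dots> = (\<integral>y. \<psi> ((b-y)/e) / e \<partial>\<mu>)"
    using key_inner(2)[OF e] by simp
  also have "\<dots> = (\<integral>y. \<psi> ((b-y)/e) \<partial>\<mu>) / e"
    by simp
  finally show ?thesis .
qed

end

theorem theorem2p6:
  fixes \<psi> \<psi>' :: "real \<Rightarrow> real" and \<mu> :: "real measure" and b :: real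
  assumes deriv: "\<And>x. (\<psi> has_real_derivative \<psi>' x) (at x)"
    and cont_deriv: "continuous_on UNIV \<psi>'"
    and psi0: "\<psi> 0 = 1"
    and even: "\<And>x. \<psi> (- x) = \<psi> x"
    and decay: "\<exists>C>0. \<exists>\<delta>>1. \<forall>x. \<bar>\<psi> x\<bar> + \<bar>x * \<psi>' x\<bar> \<le> C * jbracket x powr (- \<delta>)"
    and A_nonzero: "(\<integral>x. \<psi> x \<partial>lborel) \<noteq> 0"
    and prob: "prob_space \<mu>"
    and sets_\<mu>: "sets \<mu> = sets borel"
  defines "h \<equiv> (\<lambda>x. \<psi> x + x * \<psi>' x)"
  shows "((\<lambda>\<epsilon>. \<epsilon> * (LBINT a:{\<epsilon><..}. wavelet_transform h \<mu> b a / a))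
            \<longlongrightarrow> measure \<mu> {b}) (at_right 0) \<and>
         (\<forall>\<alpha> d. 0 < \<alpha> \<and> \<alpha> \<le> 1 \<and> has_alpha_density \<alpha> \<mu> b d \<longrightarrow>
           ((\<lambda>\<epsilon>. \<epsilon> powr (1 - \<alpha>) * (LBINT a:{\<epsilon><..}. wavelet_transform h \<mu> b a / a))
            \<longlongrightarrow> (LBINT y:{0<..}. \<alpha> * 2 powr \<alpha> * y powr (\<alpha> - 1) * \<psi> y) * d) (at_right 0))"
proof -
  obtain C \<delta> where C: "C > 0" "\<delta> > 1" "\<And>x. \<bar>\<psi> x\<bar> + \<bar>x * \<psi>' x\<bar> \<le> C * jbracket x powr (- \<delta>)"
    using decay by blast
  interpret wv \<psi> \<psi>' C \<delta>
    by (unfold_locales) (use deriv cont_deriv psi0 even C in auto)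
  interpret P: prob_space \<mu> by (rule prob)
  have sp: "space \<mu> = UNIV" using sets_eq_imp_space_eq[OF sets_\<mu>] by simp
  have ms[measurable_cong]: "sets \<mu> = sets borel" by (rule sets_\<mu>)
  have WI: "(LBINT a:{e<..}. wavelet_transform h \<mu> b a / a) = (\<integral>y. \<psi> ((b-y)/e) \<partial>\<mu>) / e"
    if "e > 0" for e
    unfolding h_def using wt_identity[OF prob sets_\<mu> that] .
  have ev: "\<forall>\<^sub>F e in at_right (0::real). e > 0" by (rule eventually_at_right_less)
  show ?thesis
  proof
    have "((\<lambda>e. \<integral>y. \<psi> ((b-y)/e) \<partial>\<mu>) \<longlongrightarrow> (\<integral>y. indicator {b} y \<partial>\<mu>)) (at_right 0)"
    proof (rule dc_at_right[where w="\<lambda>_. C"])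
      show "integrable \<mu> (\<lambda>_. C)" by simp
      show "\<bar>\<psi> ((b - x) / e)\<bar> \<le> C" for e x by (rule psi_bnd)
      show "((\<lambda>e. \<psi> ((b - y) / e)) \<longlongrightarrow> indicator {b} y) (at_right 0)" for y
      proof (cases "y = b")
        case True
        thus ?thesis using psi0 by simp
      next
        case False
        have "((\<lambda>e. \<psi> ((b - y) / e)) \<longlongrightarrow> 0) (at_right 0)"
        proof (rule Lim_null_comparison[where g="\<lambda>e. C * e / \<bar>b - y\<bar>"])
          show "\<forall>\<^sub>F e in at_right 0. norm (\<psi> ((b - y) / e)) \<le> C * e / \<bar>b - y\<bar>"
            using ev
          proof eventually_elim
            case (elim e)
            have "\<bar>\<psi> ((b - y) / e)\<bar> \<le> C / \<bar>(b - y) / e\<bar>"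
              using False elim by (intro psi_small) auto
            thus ?case using elim by simp
          qed
          show "((\<lambda>e. C * e / \<bar>b - y\<bar>) \<longlongrightarrow> 0) (at_right 0)"
            using False by (auto intro!: tendsto_eq_intros)
        qed
        thus ?thesis using False by (auto simp: indicator_def)
      qed
    qed (auto simp: sp)
    moreover have "(\<integral>y. indicator {b} y \<partial>\<mu>) = measure \<mu> {b}" by (simp add: sp)
    ultimately have L: "((\<lambda>e. \<integral>y. \<psi> ((b-y)/e) \<partial>\<mu>) \<longlongrightarrow> measure \<mu> {b}) (at_right 0)" by simp
    show "((\<lambda>\<epsilon>. \<epsilon> * (LBINT a:{\<epsilon><..}. wavelet_transform h \<mu> b a / a)) \<longlongrightarrow> measure \<mu> {b}) (at_right 0)"
    proof (rule tendsto_cong[THEN iffD2, OF _ L])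
      show "\<forall>\<^sub>F x in at_right 0. x * (LBINT a:{x<..}. wavelet_transform h \<mu> b a / a) = (\<integral>y. \<psi> ((b-y)/x) \<partial>\<mu>)"
        using ev by eventually_elim (simp add: WI)
    qed
  next
    show "\<forall>\<alpha> d. 0 < \<alpha> \<and> \<alpha> \<le> 1 \<and> has_alpha_density \<alpha> \<mu> b d \<longrightarrow>
           ((\<lambda>\<epsilon>. \<epsilon> powr (1 - \<alpha>) * (LBINT a:{\<epsilon><..}. wavelet_transform h \<mu> b a / a))
            \<longlongrightarrow> (LBINT y:{0<..}. \<alpha> * 2 powr \<alpha> * y powr (\<alpha> - 1) * \<psi> y) * d) (at_right 0)"
    proof (intro allI impI, elim conjE)
      fix \<alpha> d :: real
      assume a0: "0 < \<alpha>" and a1: "\<alpha> \<le> 1" and hd: "has_alpha_density \<alpha> \<mu> b d"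
      define Fm where "Fm = (\<lambda>r. measure \<mu> {b - r<..<b + r})"
      define G where "G = (\<lambda>r. Fm r / (2*r) powr \<alpha>)"
      have Fm_mono: "mono Fm"
      proof (rule monoI)
        fix r1 r2 :: real assume "r1 \<le> r2"
        hence "{b - r1<..<b + r1} \<subseteq> {b - r2<..<b + r2}" by auto
        thus "Fm r1 \<le> Fm r2" unfolding Fm_def
          by (intro P.finite_measure_mono) (auto simp: sets_\<mu>)
      qed
      have Fmm[measurable]: "Fm \<in> borel_measurable borel" by (rule borel_measurable_mono[OF Fm_mono])
      have Gm[measurable]: "G \<in> borel_measurable borel" unfolding G_def by measurable
      have Fm01: "0 \<le> Fm r" "Fm r \<le> 1" for r unfolding Fm_def by auto
      have Glim: "(G \<longlongrightarrow> d) (at_right 0)"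
        using hd unfolding has_alpha_density_def G_def Fm_def .
      obtain M0 where M0: "M0 \<ge> 0" "\<And>r. r > 0 \<Longrightarrow> \<bar>G r\<bar> \<le> M0"
      proof -
        have "\<forall>\<^sub>F r in at_right 0. dist (G r) d < 1"
          using Glim by (simp add: tendsto_iff)
        then obtain b0 where b0: "b0 > 0" "\<And>r. r > 0 \<Longrightarrow> r < b0 \<Longrightarrow> dist (G r) d < 1"
          by (auto simp: eventually_at_right_field)
        define M where "M = \<bar>d\<bar> + 1 + 1 / (2*b0) powr \<alpha>"
        have "\<bar>G r\<bar> \<le> M" if r: "r > 0" for r
        proof (cases "r < b0")
          case True
          have nn: "0 \<le> 1 / (2*b0) powr \<alpha>" by simp
          thus ?thesis using b0(2)[OF r True] unfolding M_def dist_real_def by linarith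
        next
          case False
          have p: "(2*b0) powr \<alpha> \<le> (2*r) powr \<alpha>" using False b0 a0 by (intro powr_mono2) auto
          have p0: "(2*b0) powr \<alpha> > 0" using b0 by simp
          have "G r \<le> 1 / (2*r) powr \<alpha>" unfolding G_def using Fm01[of r] r
            by (intro divide_right_mono) auto
          also have "\<dots> \<le> 1 / (2*b0) powr \<alpha>" using p p0 r by (intro divide_left_mono) (auto intro!: mult_pos_pos)
          finally have "G r \<le> 1 / (2*b0) powr \<alpha>" .
          moreover have "G r \<ge> 0" unfolding G_def using Fm01[of r] by simp
          ultimately show ?thesis unfolding M_def by simp
        qed
        moreover have "M \<ge> 0" unfolding M_def by simp
        ultimately show ?thesis using that by blast
      qed
      have pm: "(2*(e*t)) powr \<alpha> = e powr \<alpha> * (2*t) powr \<alpha>" if "e > 0" "t > 0" for e t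
        using that by (simp add: powr_mult[symmetric] mult_ac)
      have eq: "e powr (1 - \<alpha>) * (LBINT a:{e<..}. wavelet_transform h \<mu> b a / a)
                 = - (LBINT t:{0<..}. \<psi>' t * (2*t) powr \<alpha> * G (e*t))" if e: "e > 0" for e
      proof -
        have "e powr (1 - \<alpha>) * (LBINT a:{e<..}. wavelet_transform h \<mu> b a / a)
              = e powr (1 - \<alpha>) / e * (\<integral>y. \<psi> ((b-y)/e) \<partial>\<mu>)"
          using WI[OF e] by simp
        also have "e powr (1 - \<alpha>) / e = e powr (- \<alpha>)"
          using e by (simp add: powr_diff powr_minus_divide)
        also have "(\<integral>y. \<psi> ((b-y)/e) \<partial>\<mu>) = - (LBINT t:{0<..}. \<psi>' t * Fm (e*t))"
          unfolding Fm_def by (rule layer[OF prob sets_\<mu> e])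
        also have "e powr (- \<alpha>) * - (LBINT t:{0<..}. \<psi>' t * Fm (e*t))
                   = - (LBINT t:{0<..}. e powr (- \<alpha>) * (\<psi>' t * Fm (e*t)))"
          by simp
        also have "(LBINT t:{0<..}. e powr (- \<alpha>) * (\<psi>' t * Fm (e*t)))
                   = (LBINT t:{0<..}. \<psi>' t * (2*t) powr \<alpha> * G (e*t))"
        proof (rule set_lebesgue_integral_cong)
          show "{0::real<..} \<in> sets lborel" by simp
          show "\<forall>t. t \<in> {0<..} \<longrightarrow> e powr (- \<alpha>) * (\<psi>' t * Fm (e*t)) = \<psi>' t * (2*t) powr \<alpha> * G (e*t)"
          proof (intro allI impI)
          fix t :: real assume t: "t \<in> {0<..}"
          have "\<psi>' t * (2*t) powr \<alpha> * G (e*t) = \<psi>' t * Fm (e*t) * ((2*t) powr \<alpha> / (2*(e*t)) powr \<alpha>)"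
            unfolding G_def by simp
          also have "(2*t) powr \<alpha> / (2*(e*t)) powr \<alpha> = e powr (- \<alpha>)"
            using pm[OF e, of t] t e by (simp add: powr_minus_divide)
          finally have "\<psi>' t * (2*t) powr \<alpha> * G (e*t) = \<psi>' t * Fm (e*t) * e powr (- \<alpha>)" .
          thus "e powr (- \<alpha>) * (\<psi>' t * Fm (e*t)) = \<psi>' t * (2*t) powr \<alpha> * G (e*t)"
            by (simp only: mult_ac)
          qed
        qed
        finally show ?thesis .
      qed
      have iB2: "set_integrable lborel {0<..} (\<lambda>t. \<psi>' t * (2*t) powr \<alpha>)"
      proof -
        have "set_integrable lborel {0<..} (\<lambda>t. 2 powr \<alpha> * (t powr \<alpha> * \<psi>' t))"
          using int_B[OF a0 a1] by simp
        thus ?thesis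
          by (rule set_integrable_cong[THEN iffD1, rotated -1]) (auto simp: powr_mult)
      qed
      have lim2: "((\<lambda>e. LBINT t:{0<..}. \<psi>' t * (2*t) powr \<alpha> * G (e*t))
                   \<longlongrightarrow> (LBINT t:{0<..}. \<psi>' t * (2*t) powr \<alpha> * d)) (at_right 0)"
        unfolding set_lebesgue_integral_def
      proof (rule dc_at_right[where w="\<lambda>t. M0 * \<bar>indicator {0<..} t *\<^sub>R (\<psi>' t * (2*t) powr \<alpha>)\<bar>"])
        show "integrable lborel (\<lambda>t. M0 * \<bar>indicator {0<..} t *\<^sub>R (\<psi>' t * (2*t) powr \<alpha>)\<bar>)"
          using iB2 unfolding set_integrable_def by (intro integrable_mult_right integrable_abs)
        show "\<bar>indicator {0<..} t *\<^sub>R (\<psi>' t * (2*t) powr \<alpha> * G (e*t))\<bar>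
               \<le> M0 * \<bar>indicator {0<..} t *\<^sub>R (\<psi>' t * (2*t) powr \<alpha>)\<bar>" if e: "e > 0" for e t
        proof (cases "t > 0")
          case True
          have "\<bar>G (e*t)\<bar> \<le> M0" using M0(2)[of "e*t"] e True by simp
          thus ?thesis using True
            by (simp add: abs_mult mult_left_mono mult.commute[of M0])
        qed simp
        show "((\<lambda>e. indicator {0<..} t *\<^sub>R (\<psi>' t * (2*t) powr \<alpha> * G (e*t)))
               \<longlongrightarrow> indicator {0<..} t *\<^sub>R (\<psi>' t * (2*t) powr \<alpha> * d)) (at_right 0)" for t
        proof (cases "t > 0")
          case True
          have "filterlim (\<lambda>e. e * t) (at_right 0) (at_right 0)"
          proof (rule tendsto_imp_filterlim_at_right)
            show "((\<lambda>e. e * t) \<longlongrightarrow> 0) (at_right 0)"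
              by (auto intro!: tendsto_eq_intros)
            show "\<forall>\<^sub>F e in at_right 0. 0 < e * t"
              using ev by eventually_elim (use True in simp)
          qed
          hence "((\<lambda>e. G (e*t)) \<longlongrightarrow> d) (at_right 0)"
            using filterlim_compose[OF Glim] by blast
          thus ?thesis using True by (auto intro!: tendsto_intros)
        qed simp
      qed measurable
      have val: "- (LBINT t:{0<..}. \<psi>' t * (2*t) powr \<alpha> * d)
                 = (LBINT y:{0<..}. \<alpha> * 2 powr \<alpha> * y powr (\<alpha> - 1) * \<psi> y) * d"
      proof -
        have "(LBINT t:{0<..}. \<psi>' t * (2*t) powr \<alpha> * d) = (LBINT t:{0<..}. 2 powr \<alpha> * d * (t powr \<alpha> * \<psi>' t))"
          by (rule set_lebesgue_integral_cong) (auto simp: powr_mult)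
        also have "\<dots> = 2 powr \<alpha> * d * (LBINT t:{0<..}. t powr \<alpha> * \<psi>' t)" by simp
        also have "(LBINT t:{0<..}. t powr \<alpha> * \<psi>' t) = - ((LBINT t:{0<..}. t powr (\<alpha>-1) * \<psi> t) * \<alpha>)"
          using ibp[OF a0 a1] by simp
        finally have X: "(LBINT t:{0<..}. \<psi>' t * (2*t) powr \<alpha> * d) = 2 powr \<alpha> * d * - ((LBINT t:{0<..}. t powr (\<alpha>-1) * \<psi> t) * \<alpha>)" .
        have "(LBINT y:{0<..}. \<alpha> * 2 powr \<alpha> * y powr (\<alpha> - 1) * \<psi> y)
                    = (LBINT y:{0<..}. (\<alpha> * 2 powr \<alpha>) * (y powr (\<alpha> - 1) * \<psi> y))"
          by (simp add: mult_ac)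
        also have "\<dots> = (\<alpha> * 2 powr \<alpha>) * (LBINT y:{0<..}. y powr (\<alpha> - 1) * \<psi> y)" by simp
        finally have Y: "(LBINT y:{0<..}. \<alpha> * 2 powr \<alpha> * y powr (\<alpha> - 1) * \<psi> y) = (\<alpha> * 2 powr \<alpha>) * (LBINT y:{0<..}. y powr (\<alpha> - 1) * \<psi> y)" .
        show ?thesis unfolding X Y by (simp add: algebra_simps)
      qed
      have "((\<lambda>e. - (LBINT t:{0<..}. \<psi>' t * (2*t) powr \<alpha> * G (e*t)))
              \<longlongrightarrow> (LBINT y:{0<..}. \<alpha> * 2 powr \<alpha> * y powr (\<alpha> - 1) * \<psi> y) * d) (at_right 0)"
        using tendsto_minus[OF lim2] val by simp
      thus "((\<lambda>\<epsilon>. \<epsilon> powr (1 - \<alpha>) * (LBINT a:{\<epsilon><..}. wavelet_transform h \<mu> b a / a))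
            \<longlongrightarrow> (LBINT y:{0<..}. \<alpha> * 2 powr \<alpha> * y powr (\<alpha> - 1) * \<psi> y) * d) (at_right 0)"
        by (rule tendsto_cong[THEN iffD2, rotated]) (use ev in \<open>eventually_elim, simp add: eq\<close>)
    qed
  qed
qed

end
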